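(* Let $p$ be a prime with $p\equiv 1\pmod 4$, let $a$ be a generator of $\mathbb{F}_p^*$, let $k=\frac{p-1}{4}$, $\theta=\exp\!\left(\frac{2\pi i}{p-1}\right)$ and $\eta=\exp\!\left(\frac{2\pi i}{p}\right)$. For $0\le x<p$ define $\varphi_x\in\mathcal{H}=\mathbb{C}(\mathbb{F}_p)$ by $$\varphi_x(n)=\begin{cases}\dfrac{1}{\sqrt{p}}\,\eta^{2^{-1}a^k n^2}, & x=0,\\[2mm] \dfrac{1}{\sqrt{p(p-1)}}\displaystyle\sum_{j=1}^{p-1}\theta^{x\log_a j}\,\eta^{a^k(j-n)^2-2^{-1}a^k n^2}, & 0<x<p,\end{cases}\qquad n\in\mathbb{F}_p.$$ Then $\Phi_p=\{\varphi_x:0\le x<p\}$ is an orthonormal basis of $\mathcal{H}$ and each $\varphi_x$ is an eigenvector of the discrete Fourier transform $F$.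
   Context: $\mathcal{H}=\mathbb{C}(\mathbb{F}_p)$ is the Hilbert space of functions $\mathbb{F}_p\to\mathbb{C}$ with the standard inner product $\langle\varphi,\psi\rangle=\sum_{n\in\mathbb{F}_p}\varphi(n)\overline{\psi(n)}$. The discrete Fourier transform is the operator $F[\varphi](m)=\frac{1}{\sqrt{p}}\sum_{n\in\mathbb{F}_p}\eta^{mn}\varphi(n)$. Exponents of $\eta$ are computed in $\mathbb{F}_p$ (with $2^{-1}$ the inverse of $2$ in $\mathbb{F}_p$ and $a^k\in\mathbb{F}_p$); for $j\in\mathbb{F}_p^*$, $\log_a j$ is the unique $m\in\{0,\dots,p-2\}$ with $a^m=j$. *)

theory Defs
  imports "HOL-Analysis.Analysis" "HOL-Number_Theory.Number_Theory"
begin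

text \<open>Elements of F_p are represented by naturals 0..p-1; functions F_p -> C by
  functions nat => complex, only their values on {..<p} matter.\<close>

definition eta_pow :: "nat \<Rightarrow> int \<Rightarrow> complex" where
  "eta_pow p e = exp (2 * of_real pi * \<i> * of_int (e mod int p) / of_nat p)"

definition theta_pow :: "nat \<Rightarrow> nat \<Rightarrow> complex" where
  "theta_pow p e = exp (2 * of_real pi * \<i> * of_nat e / of_nat (p - 1))"

definition inv2 :: "nat \<Rightarrow> int" where
  "inv2 p = (THE t. 0 \<le> t \<and> t < int p \<and> (2 * t) mod int p = 1)"

definition dlog :: "nat \<Rightarrow> nat \<Rightarrow> nat \<Rightarrow> nat" where
  "dlog p a j = (THE m. m \<le> p - 2 \<and> a ^ m mod p = j mod p)"

definition phi :: "nat \<Rightarrow> nat \<Rightarrow> nat \<Rightarrow> nat \<Rightarrow> complex" where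
  "phi p a x n =
    (let k = (p - 1) div 4; c = int (a ^ k mod p) in
     if x = 0 then
       1 / of_real (sqrt (real p)) * eta_pow p (inv2 p * c * int n ^ 2)
     else
       1 / of_real (sqrt (real p * real (p - 1))) *
         (\<Sum>j = 1..p - 1. theta_pow p (x * dlog p a j) *
            eta_pow p (c * (int j - int n) ^ 2 - inv2 p * c * int n ^ 2)))"

definition DFT :: "nat \<Rightarrow> (nat \<Rightarrow> complex) \<Rightarrow> nat \<Rightarrow> complex" where
  "DFT p f m = 1 / of_real (sqrt (real p)) * (\<Sum>n<p. eta_pow p (int m * int n) * f n)"

definition inner_Fp :: "nat \<Rightarrow> (nat \<Rightarrow> complex) \<Rightarrow> (nat \<Rightarrow> complex) \<Rightarrow> complex" where
  "inner_Fp p f g = (\<Sum>n<p. f n * cnj (g n))"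

end

theory Submission
  imports Defs "Jordan_Normal_Form.Determinant"
begin


definition EE :: "nat \<Rightarrow> int \<Rightarrow> complex" where
  "EE N t = exp (2 * of_real pi * \<i> * of_int t / of_nat N)"

lemma EE_add: "EE N (s + t) = EE N s * EE N t"
proof -
  have "2 * of_real pi * \<i> * of_int (s + t) / of_nat N =
        2 * of_real pi * \<i> * of_int s / of_nat N + 2 * of_real pi * \<i> * of_int t / of_nat N"
    by (simp add: distrib_left add_divide_distrib)
  then show ?thesis unfolding EE_def by (simp only: exp_add)
qed

lemma EE_mult_N: assumes "N > 0" shows "EE N (int N * q) = 1"
proof -
  have "2 * of_real pi * \<i> * of_int (int N * q) / of_nat N = 2 * of_real pi * \<i> * of_int q"
    using assms by simp
  then have "EE N (int N * q) = exp (2 * of_real pi * \<i> * of_int q)"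
    unfolding EE_def by simp
  also have "\<dots> = 1" using exp_integer_2pi[of "of_int q"] by (simp add: mult.commute mult.left_commute)
  finally show ?thesis .
qed


lemma EE_zero[simp]: "EE N 0 = 1" unfolding EE_def by simp

lemma EE_cong: assumes "N > 0" "[s = t] (mod int N)" shows "EE N s = EE N t"
proof -
  from assms(2) have "int N dvd (t - s)" by (simp add: cong_iff_dvd_diff dvd_diff_commute)
  then obtain q where q: "t - s = int N * q" by blast
  have "t = s + int N * q" using q by simp
  then have "EE N t = EE N s * EE N (int N * q)" by (simp add: EE_add)
  then show ?thesis using EE_mult_N[OF assms(1)] by simp
qed

lemma EE_pow: "EE N t ^ i = EE N (t * int i)"
  by (induction i) (simp_all add: EE_add[symmetric] distrib_left algebra_simps)

lemma cnj_EE: "cnj (EE N t) = EE N (- t)"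
  unfolding EE_def exp_cnj by simp

lemma EE_mult_cnj: "EE N t * cnj (EE N t) = 1"
  by (simp add: cnj_EE EE_add[symmetric])

lemma EE_eq_1: assumes "N > 0" shows "EE N t = 1 \<longleftrightarrow> int N dvd t"
proof
  assume "int N dvd t"
  then obtain q where "t = int N * q" by blast
  then show "EE N t = 1" using EE_mult_N[OF assms] by simp
next
  assume "EE N t = 1"
  then have "exp (complex_of_real (2 * pi * of_int t / of_nat N) * \<i>) = 1"
    unfolding EE_def by (simp add: mult.commute mult.left_commute)
  then obtain n :: int where n: "2 * pi * of_int t / of_nat N = of_int (2 * n) * pi"
    unfolding exp_eq_1 by auto
  then have "of_int t = (of_int n * of_nat N :: real)" using assms pi_gt_zero
    by (simp add: field_simps)
  then have "t = n * int N" by (metis of_int_eq_iff of_int_mult of_int_of_nat_eq)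
  then show "int N dvd t" by simp
qed

lemma root_sum: assumes "N > 0"
  shows "(\<Sum>i<N. EE N (t * int i)) = (if int N dvd t then of_nat N else 0)"
proof (cases "int N dvd t")
  case True
  then have "\<And>i. EE N (t * int i) = 1" using EE_eq_1[OF assms] by (simp add: dvd_mult2)
  then show ?thesis using True by simp
next
  case False
  then have ne: "EE N t \<noteq> 1" using EE_eq_1[OF assms] by simp
  have "(\<Sum>i<N. EE N (t * int i)) = (\<Sum>i<N. EE N t ^ i)" by (simp add: EE_pow)
  also have "\<dots> = (EE N t ^ N - 1) / (EE N t - 1)" by (rule geometric_sum[OF ne])
  also have "EE N t ^ N = 1" by (simp add: EE_pow EE_eq_1[OF assms])
  finally show ?thesis using False by simp
qed

lemma eta_pow_EE: assumes "p > 0" shows "eta_pow p t = EE p t"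
proof -
  have "eta_pow p t = EE p (t mod int p)" unfolding eta_pow_def EE_def by simp
  also have "\<dots> = EE p t" by (rule EE_cong[OF assms]) (simp add: cong_def)
  finally show ?thesis .
qed

lemma theta_pow_EE: "theta_pow p e = EE (p - 1) (int e)"
  unfolding theta_pow_def EE_def by simp


lemma inv2_eq: assumes "odd p" "p > 1" shows "inv2 p = (int p + 1) div 2"
  unfolding inv2_def
proof (rule the_equality)
  let ?t = "(int p + 1) div 2"
  have e: "2 * ?t = int p + 1" using assms(1) by presburger
  have m: "2 * ?t mod int p = 1"
  proof -
    have "2 * ?t mod int p = (int p + 1) mod int p" using e by simp
    also have "\<dots> = 1 mod int p" by (simp add: mod_add_self1)
    finally show ?thesis using assms by simp
  qed
  show "0 \<le> ?t \<and> ?t < int p \<and> 2 * ?t mod int p = 1" using assms e m by auto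
  fix t assume t: "0 \<le> t \<and> t < int p \<and> 2 * t mod int p = 1"
  have "[2 * t = 2 * ?t] (mod int p)" using t m by (metis cong_def)
  moreover have "coprime 2 (int p)" using assms(1) by (simp add: coprime_commute)
  ultimately have "[t = ?t] (mod int p)" using cong_mult_lcancel by blast
  moreover have "int p \<ge> 3" using assms by presburger
  ultimately show "t = ?t" using t by (intro cong_less_imp_eq_int) auto
qed

locale L =
  fixes p a :: nat and c h :: int
  assumes prime: "prime p" and p4: "p mod 4 = 1" and primroot: "residue_primroot p a"
    and c_def: "c = int (a ^ ((p - 1) div 4) mod p)" and h_def: "h = inv2 p"
begin

lemma p_gt1: "p > 1" using prime prime_gt_1_nat by blast
lemma p_pos: "p > 0" using p_gt1 by simp
lemma p_odd: "odd p" using p4 by presburger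
lemma p_ge5: "p \<ge> 5" using p4 p_gt1 by presburger

lemma h_cong: "[2 * h = 1] (mod int p)"
proof -
  have "2 * h = int p + 1" using inv2_eq[OF p_odd p_gt1] h_def p_odd by presburger
  then show ?thesis by (simp add: cong_def)
qed

lemma ord_a: "ord p a = p - 1"
  using primroot prime by (simp add: residue_primroot_def totient_prime)

lemma coprime_a: "coprime p a" using primroot by (simp add: residue_primroot_def)

lemma b_cong: "[int (a ^ ((p - 1) div 2)) = -1] (mod int p)"
proof -
  let ?b = "a ^ ((p - 1) div 2)"
  have "[a ^ (p - 1) = 1] (mod p)" using ord[of a p] ord_a by simp
  moreover have "a ^ (p - 1) = ?b * ?b"
  proof -
    have "p - 1 = (p - 1) div 2 + (p - 1) div 2" using p_odd by presburger
    then show ?thesis by (metis power_add)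
  qed
  ultimately have "[int ?b * int ?b = 1] (mod int p)" by (metis cong_int_iff of_nat_1 of_nat_mult)
  then have "int p dvd (int ?b - 1) * (int ?b + 1)"
    by (simp add: cong_iff_dvd_diff dvd_diff_commute algebra_simps)
  moreover have pp: "prime (int p)" using prime by simp
  ultimately have d: "int p dvd (int ?b - 1) \<or> int p dvd (int ?b + 1)"
    using prime_dvd_mult_iff by blast
  have "\<not> [?b = 1] (mod p)"
  proof
    assume "[?b = 1] (mod p)"
    then have "ord p a dvd (p - 1) div 2" using ord_divides' by simp
    then have "p - 1 dvd (p - 1) div 2" using ord_a by simp
    moreover have "0 < (p - 1) div 2" "(p - 1) div 2 < p - 1" using p_ge5 by auto
    ultimately show False using dvd_imp_le[of "p - 1" "(p - 1) div 2"] by linarith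
  qed
  then have "\<not> int p dvd (int ?b - 1)"
    by (metis cong_iff_dvd_diff cong_int_iff of_nat_1)
  with d have "int p dvd (int ?b + 1)" by blast
  then show ?thesis by (simp add: cong_iff_dvd_diff)
qed

lemma c_cong: "[c ^ 2 = - 1] (mod int p)"
proof -
  let ?k = "(p - 1) div 4"
  have "[c = int (a ^ ?k)] (mod int p)" unfolding c_def by (simp add: cong_def of_nat_mod)
  then have "[c ^ 2 = int (a ^ ?k) ^ 2] (mod int p)" by (rule cong_pow)
  moreover have "int (a ^ ?k) ^ 2 = int (a ^ ((p - 1) div 2))"
  proof -
    have "?k * 2 = (p - 1) div 2" using p4 by presburger
    then show ?thesis by (metis of_nat_power power_mult)
  qed
  ultimately show ?thesis using b_cong cong_trans by metis
qed

lemma c_ndvd: "\<not> int p dvd c"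
proof
  assume "int p dvd c"
  then have "int p dvd c ^ 2" by (simp add: power2_eq_square)
  then have "[c ^ 2 = 0] (mod int p)" by (simp add: cong_0_iff)
  then have "[-1 = 0] (mod int p)" using c_cong by (meson cong_sym cong_trans)
  then have "int p dvd 1" by (simp add: cong_0_iff)
  then show False using p_gt1 by simp
qed

lemma prime_int: "prime (int p)" using prime by simp

lemma dvd_2c_iff: "int p dvd (2 * c * t) \<longleftrightarrow> int p dvd t"
proof -
  have "\<not> int p dvd 2" using p_ge5 by (auto dest: zdvd_imp_le)
  then show ?thesis using c_ndvd prime_int by (simp add: prime_dvd_mult_iff)
qed

end


lemma sum_shift_mod:
  fixes F :: "int \<Rightarrow> complex" and p :: nat
  assumes p: "p > 0" and per: "\<And>x. F (x mod int p) = F x"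
  shows "(\<Sum>n<p. F (int n - s)) = (\<Sum>n<p. F (int n))"
proof -
  define g where "g n = nat ((int n - s) mod int p)" for n
  define g' where "g' n = nat ((int n + s) mod int p)" for n
  have bij: "bij_betw g {..<p} {..<p}"
  proof (rule bij_betw_byWitness[where f'=g'])
    show "\<forall>a\<in>{..<p}. g' (g a) = a"
    proof
      fix a assume a: "a \<in> {..<p}"
      have "int (g' (g a)) = ((int a - s) mod int p + s) mod int p"
        unfolding g_def g'_def using p by simp
      also have "\<dots> = (int a - s + s) mod int p" by (simp add: mod_add_left_eq)
      also have "\<dots> = int a" using a by simp
      finally show "g' (g a) = a" by simp
    qed
    show "\<forall>a\<in>{..<p}. g (g' a) = a"
    proof
      fix a assume a: "a \<in> {..<p}"
      have "int (g (g' a)) = ((int a + s) mod int p - s) mod int p"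
        unfolding g_def g'_def using p by simp
      also have "\<dots> = (int a + s - s) mod int p" by (simp add: mod_diff_left_eq)
      also have "\<dots> = int a" using a by simp
      finally show "g (g' a) = a" by simp
    qed
    show "g ` {..<p} \<subseteq> {..<p}" unfolding g_def using p by (auto simp: nat_less_iff)
    show "g' ` {..<p} \<subseteq> {..<p}" unfolding g'_def using p by (auto simp: nat_less_iff)
  qed
  have "(\<Sum>n<p. F (int n - s)) = (\<Sum>n<p. F (int (g n)))"
  proof (rule sum.cong)
    fix n assume "n \<in> {..<p}"
    have "int (g n) = (int n - s) mod int p" unfolding g_def using p by simp
    then show "F (int n - s) = F (int (g n))" using per by metis
  qed simp
  also have "\<dots> = (\<Sum>n<p. F (int n))" by (rule sum.reindex_bij_betw[OF bij])
  finally show ?thesis .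
qed

context L
begin

lemma EEp_cong: "[s = t] (mod int p) \<Longrightarrow> EE p s = EE p t"
  by (rule EE_cong[OF p_pos])

lemma cong_ideal:
  assumes "X - Y = (2 * h - 1) * P + (c ^ 2 + 1) * Q"
  shows "[X = Y] (mod int p)"
proof -
  have "int p dvd (2 * h - 1)" using h_cong by (simp add: cong_iff_dvd_diff)
  moreover have "int p dvd (c ^ 2 + 1)" using c_cong by (simp add: cong_iff_dvd_diff)
  ultimately have "int p dvd X - Y" unfolding assms by (simp add: dvd_add dvd_mult2)
  then show ?thesis by (simp add: cong_iff_dvd_diff)
qed

definition psi :: "nat \<Rightarrow> nat \<Rightarrow> complex" where
  "psi j n = EE p (c * (int j - int n) ^ 2 - h * c * int n ^ 2)"

definition G :: complex where "G = (\<Sum>n<p. EE p (h * c * int n ^ 2))"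

lemma psi0: "psi 0 n = EE p (h * c * int n ^ 2)"
  unfolding psi_def
  by (rule EEp_cong, rule cong_ideal[where P = "- c * int n ^ 2" and Q = 0]) (simp add: algebra_simps power2_eq_square)

lemma psi_cnj_prod: "psi j n * cnj (psi l n) = EE p (c * (int j ^ 2 - int l ^ 2)) * EE p (- 2 * c * (int j - int l) * int n)"
proof -
  have "psi j n * cnj (psi l n) = EE p ((c * (int j - int n) ^ 2 - h * c * int n ^ 2) - (c * (int l - int n) ^ 2 - h * c * int n ^ 2))"
    unfolding psi_def cnj_EE EE_add[symmetric] by simp
  also have "\<dots> = EE p (c * (int j ^ 2 - int l ^ 2) + (- 2 * c * (int j - int l) * int n))"
    by (simp add: algebra_simps power2_eq_square)
  finally show ?thesis by (simp only: EE_add)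
qed

lemma inner_psi: assumes "j < p" "l < p"
  shows "(\<Sum>n<p. psi j n * cnj (psi l n)) = (if j = l then of_nat p else 0)"
proof -
  have "(\<Sum>n<p. psi j n * cnj (psi l n)) = EE p (c * (int j ^ 2 - int l ^ 2)) * (\<Sum>n<p. EE p ((- 2 * c * (int j - int l)) * int n))"
    by (simp add: psi_cnj_prod sum_distrib_left)
  also have "(\<Sum>n<p. EE p ((- 2 * c * (int j - int l)) * int n)) = (if int p dvd (- 2 * c * (int j - int l)) then of_nat p else 0)"
    by (rule root_sum[OF p_pos])
  also have "int p dvd (- 2 * c * (int j - int l)) \<longleftrightarrow> j = l"
  proof -
    have "int p dvd (- 2 * c * (int j - int l)) \<longleftrightarrow> int p dvd (2 * c * (int j - int l))"
      by (metis dvd_minus_iff minus_mult_left)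
    also have "\<dots> \<longleftrightarrow> int p dvd (int j - int l)" by (rule dvd_2c_iff)
    also have "\<dots> \<longleftrightarrow> j = l"
    proof
      assume "int p dvd (int j - int l)"
      then have "[int j = int l] (mod int p)" by (simp add: cong_iff_dvd_diff)
      then show "j = l" using assms by (metis cong_int_iff cong_less_imp_eq_nat zero_le)
    qed simp
    finally show ?thesis .
  qed
  finally show ?thesis by simp
qed

end


context L
begin

lemma psi_cong: assumes "[int j' = J] (mod int p)"
  shows "psi j' m = EE p (c * (J - int m) ^ 2 - h * c * int m ^ 2)"
  unfolding psi_def
  by (rule EEp_cong, rule cong_diff[OF cong_scalar_left[OF cong_pow[OF cong_diff[OF assms cong_refl]]] cong_refl])

definition sigma :: "nat \<Rightarrow> nat" where "sigma j = nat ((c * int j) mod int p)"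
definition tau :: "nat \<Rightarrow> nat" where "tau j = nat ((- c * int j) mod int p)"

lemma int_sigma: "int (sigma j) = (c * int j) mod int p"
  unfolding sigma_def using p_pos by simp
lemma int_tau: "int (tau j) = (- c * int j) mod int p"
  unfolding tau_def using p_pos by simp

lemma DFT_psi: "(\<Sum>n<p. EE p (int m * int n) * psi j n) = G * psi (sigma j) m"
proof -
  define s where "s = c * (int m - 2 * c * int j)"
  define K where "K = EE p (c * (c * int j - int m) ^ 2 - h * c * int m ^ 2)"
  have each: "EE p (int m * int n) * psi j n = EE p (h * c * (int n - s) ^ 2) * K" for n
  proof -
    let ?M = "int m" and ?N = "int n" and ?J = "int j"
    have "EE p (int m * int n) * psi j n = EE p (?M * ?N + (c * (?J - ?N) ^ 2 - h * c * ?N ^ 2))"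
      unfolding psi_def EE_add ..
    also have "\<dots> = EE p (h * c * (?N - s) ^ 2 + (c * (c * ?J - ?M) ^ 2 - h * c * ?M ^ 2))"
    proof (rule EEp_cong, rule cong_ideal[where
          Q = "2*h*?M*?N - 4*h*c*?N*?J - h*c*?M^2 + 4*h*c^2*?M*?J - 4*h*c^3*?J^2 - c*?J^2 + 2*?M*?J - 4*h*?M*?J + 4*h*c*?J^2"
          and P = "- c*?N^2 + c*?M^2 - ?M*?N + 2*c*?N*?J + 2*?M*?J - 2*c*?J^2"])
      show "?M * ?N + (c * (?J - ?N)\<^sup>2 - h * c * ?N\<^sup>2) -
          (h * c * (?N - s)\<^sup>2 + (c * (c * ?J - ?M)\<^sup>2 - h * c * ?M\<^sup>2)) =
          (2 * h - 1) * (- c*?N^2 + c*?M^2 - ?M*?N + 2*c*?N*?J + 2*?M*?J - 2*c*?J^2) +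
          (c\<^sup>2 + 1) * (2*h*?M*?N - 4*h*c*?N*?J - h*c*?M^2 + 4*h*c^2*?M*?J - 4*h*c^3*?J^2 - c*?J^2 + 2*?M*?J - 4*h*?M*?J + 4*h*c*?J^2)"
        unfolding s_def by (simp add: algebra_simps power2_eq_square power3_eq_cube)
    qed
    also have "\<dots> = EE p (h * c * (int n - s) ^ 2) * K" unfolding K_def EE_add ..
    finally show ?thesis .
  qed
  have "(\<Sum>n<p. EE p (int m * int n) * psi j n) = (\<Sum>n<p. EE p (h * c * (int n - s) ^ 2)) * K"
    by (simp add: each sum_distrib_right)
  also have "(\<Sum>n<p. EE p (h * c * (int n - s) ^ 2)) = G"
    unfolding G_def
  proof (rule sum_shift_mod[OF p_pos, where F = "\<lambda>x. EE p (h * c * x ^ 2)"])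
    fix x
    show "EE p (h * c * (x mod int p) ^ 2) = EE p (h * c * x ^ 2)"
      by (rule EEp_cong, rule cong_scalar_left, rule cong_pow) (simp add: cong_def)
  qed
  also have "K = psi (sigma j) m"
    unfolding K_def by (rule psi_cong[symmetric]) (simp add: int_sigma cong_def)
  finally show ?thesis .
qed

end


context L
begin

lemma tau_sigma: "j < p \<Longrightarrow> tau (sigma j) = j"
proof -
  assume j: "j < p"
  have "int (tau (sigma j)) = (- c * ((c * int j) mod int p)) mod int p" by (simp add: int_tau int_sigma)
  also have "\<dots> = (- c * (c * int j)) mod int p" by (rule mod_mult_right_eq)
  also have "\<dots> = int j mod int p"
    using cong_ideal[where X = "- c * (c * int j)" and Y = "int j" and P = 0 and Q = "- int j"]
    by (simp add: cong_def algebra_simps power2_eq_square)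
  also have "\<dots> = int j" using j by simp
  finally show ?thesis by simp
qed

lemma sigma_tau: "l < p \<Longrightarrow> sigma (tau l) = l"
proof -
  assume j: "l < p"
  have "int (sigma (tau l)) = (c * ((- c * int l) mod int p)) mod int p" by (simp add: int_tau int_sigma)
  also have "\<dots> = (c * (- c * int l)) mod int p" by (rule mod_mult_right_eq)
  also have "\<dots> = int l mod int p"
    using cong_ideal[where X = "c * (- c * int l)" and Y = "int l" and P = 0 and Q = "- int l"]
    by (simp add: cong_def algebra_simps power2_eq_square)
  also have "\<dots> = int l" using j by simp
  finally show ?thesis by simp
qed

lemma sigma_lt: "sigma j < p" unfolding sigma_def using p_pos by (simp add: nat_less_iff)
lemma tau_lt: "tau j < p" unfolding tau_def using p_pos by (simp add: nat_less_iff)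

lemma bij_sigma: "bij_betw sigma {..<p} {..<p}"
  by (rule bij_betw_byWitness[where f' = tau]) (auto simp: tau_sigma sigma_tau sigma_lt tau_lt)

lemma comb_inner:
  "inner_Fp p (\<lambda>n. \<Sum>j<p. w j * psi j n) (\<lambda>n. \<Sum>l<p. v l * psi l n) = of_nat p * (\<Sum>j<p. w j * cnj (v j))"
proof -
  have "inner_Fp p (\<lambda>n. \<Sum>j<p. w j * psi j n) (\<lambda>n. \<Sum>l<p. v l * psi l n)
      = (\<Sum>n<p. \<Sum>j<p. \<Sum>l<p. w j * cnj (v l) * (psi j n * cnj (psi l n)))"
    unfolding inner_Fp_def cnj_sum sum_product complex_cnj_mult by (simp add: mult_ac)
  also have "\<dots> = (\<Sum>j<p. \<Sum>n<p. \<Sum>l<p. w j * cnj (v l) * (psi j n * cnj (psi l n)))"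
    by (rule sum.swap)
  also have "\<dots> = (\<Sum>j<p. \<Sum>l<p. \<Sum>n<p. w j * cnj (v l) * (psi j n * cnj (psi l n)))"
    by (rule sum.cong[OF refl], rule sum.swap)
  also have "\<dots> = (\<Sum>j<p. \<Sum>l<p. w j * cnj (v l) * (\<Sum>n<p. psi j n * cnj (psi l n)))"
    by (simp add: sum_distrib_left)
  also have "\<dots> = (\<Sum>j<p. \<Sum>l<p. w j * cnj (v l) * (if j = l then of_nat p else 0))"
    by (intro sum.cong refl) (simp add: inner_psi)
  also have "\<dots> = (\<Sum>j<p. w j * cnj (v j) * of_nat p)"
    by (simp add: if_distrib cong: if_cong)
  finally show ?thesis by (simp add: sum_distrib_left mult_ac)
qed

end


context L
begin

lemma comb_DFT:
  "DFT p (\<lambda>n. \<Sum>j<p. w j * psi j n) m = G / of_real (sqrt (real p)) * (\<Sum>l<p. w (tau l) * psi l m)"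
proof -
  have "DFT p (\<lambda>n. \<Sum>j<p. w j * psi j n) m = 1 / of_real (sqrt (real p)) * (\<Sum>j<p. w j * (\<Sum>n<p. EE p (int m * int n) * psi j n))"
  proof -
    have "(\<Sum>n<p. EE p (int m * int n) * (\<Sum>j<p. w j * psi j n)) = (\<Sum>n<p. \<Sum>j<p. w j * (EE p (int m * int n) * psi j n))"
      by (simp add: sum_distrib_left mult_ac)
    also have "\<dots> = (\<Sum>j<p. \<Sum>n<p. w j * (EE p (int m * int n) * psi j n))" by (rule sum.swap)
    also have "\<dots> = (\<Sum>j<p. w j * (\<Sum>n<p. EE p (int m * int n) * psi j n))" by (simp add: sum_distrib_left)
    finally show ?thesis unfolding DFT_def eta_pow_EE[OF p_pos] by simp
  qed
  also have "\<dots> = 1 / of_real (sqrt (real p)) * (\<Sum>j<p. w j * (G * psi (sigma j) m))"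
    by (simp add: DFT_psi)
  also have "(\<Sum>j<p. w j * (G * psi (sigma j) m)) = G * (\<Sum>j<p. w (tau (sigma j)) * psi (sigma j) m)"
    by (simp add: sum_distrib_left tau_sigma mult_ac)
  also have "(\<Sum>j<p. w (tau (sigma j)) * psi (sigma j) m) = (\<Sum>l<p. w (tau l) * psi l m)"
    by (rule sum.reindex_bij_betw[OF bij_sigma, where g = "\<lambda>l. w (tau l) * psi l m"])
  finally show ?thesis by simp
qed

end


context L
begin

lemma gen_bij: "bij_betw (\<lambda>i. a ^ i mod p) {..<p - 1} {0<..<p}"
  using residue_primroot_is_generator[OF p_gt1 primroot] prime
  by (simp add: totient_prime totatives_prime)

lemma dlog_pow: assumes "i < p - 1" shows "dlog p a (a ^ i mod p) = i"
  unfolding dlog_def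
proof (rule the_equality)
  show "i \<le> p - 2 \<and> a ^ i mod p = a ^ i mod p mod p" using assms by simp
  fix m assume m: "m \<le> p - 2 \<and> a ^ m mod p = a ^ i mod p mod p"
  have "m \<in> {..<p - 1}" "i \<in> {..<p - 1}" using m assms p_gt1 by auto
  moreover have "a ^ m mod p = a ^ i mod p" using m by simp
  ultimately show "m = i" using inj_onD[OF bij_betw_imp_inj_on[OF gen_bij]] by blast
qed

lemma dlog_props: assumes "0 < j" "j < p"
  shows "dlog p a j < p - 1" "a ^ dlog p a j mod p = j"
proof -
  have "j \<in> (\<lambda>i. a ^ i mod p) ` {..<p - 1}" using bij_betw_imp_surj_on[OF gen_bij] assms by simp
  then obtain i where i: "i < p - 1" "a ^ i mod p = j" by auto
  then have "dlog p a j = i" using dlog_pow by metis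
  then show "dlog p a j < p - 1" "a ^ dlog p a j mod p = j" using i by auto
qed

end


context L
begin

definition chi :: "nat \<Rightarrow> nat \<Rightarrow> complex" where
  "chi x j = theta_pow p (x * dlog p a j)"

lemma chi_EE: "chi x j = EE (p - 1) (int x * int (dlog p a j))"
  unfolding chi_def theta_pow_EE by simp

lemma p1_pos: "p - 1 > 0" using p_gt1 by simp

lemma char_orth: assumes "0 < x" "x < p" "0 < y" "y < p"
  shows "(\<Sum>j\<in>{0<..<p}. chi x j * cnj (chi y j)) = (if x = y then of_nat (p - 1) else 0)"
proof -
  have "(\<Sum>j\<in>{0<..<p}. chi x j * cnj (chi y j)) = (\<Sum>i<p - 1. chi x (a ^ i mod p) * cnj (chi y (a ^ i mod p)))"
    by (rule sum.reindex_bij_betw[OF gen_bij, symmetric])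
  also have "\<dots> = (\<Sum>i<p - 1. EE (p - 1) ((int x - int y) * int i))"
  proof (rule sum.cong[OF refl])
    fix i assume "i \<in> {..<p - 1}"
    then have "dlog p a (a ^ i mod p) = i" by (simp add: dlog_pow)
    then show "chi x (a ^ i mod p) * cnj (chi y (a ^ i mod p)) = EE (p - 1) ((int x - int y) * int i)"
      by (simp add: chi_EE cnj_EE EE_add[symmetric] algebra_simps)
  qed
  also have "\<dots> = (if int (p - 1) dvd (int x - int y) then of_nat (p - 1) else 0)"
    by (rule root_sum[OF p1_pos])
  also have "int (p - 1) dvd (int x - int y) \<longleftrightarrow> x = y"
  proof
    assume "int (p - 1) dvd (int x - int y)"
    then have "[int x - 1 = int y - 1] (mod int (p - 1))" by (simp add: cong_iff_dvd_diff)
    then have "int x - 1 = int y - 1" using assms by (intro cong_less_imp_eq_int) auto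
    then show "x = y" by simp
  qed simp
  finally show ?thesis .
qed

lemma chi_mult: assumes "0 < j" "j < p" "0 < l" "l < p" "0 < m" "m < p" "[m = j * l] (mod p)"
  shows "chi x m = chi x j * chi x l"
proof -
  have "[a ^ dlog p a m = a ^ (dlog p a j + dlog p a l)] (mod p)"
  proof -
    have "[a ^ dlog p a m = m] (mod p)" using dlog_props[of m] assms by (simp add: cong_def)
    moreover have "[a ^ (dlog p a j + dlog p a l) = j * l] (mod p)"
    proof -
      have "[a ^ dlog p a j = j] (mod p)" using dlog_props[of j] assms by (simp add: cong_def)
      moreover have "[a ^ dlog p a l = l] (mod p)" using dlog_props[of l] assms by (simp add: cong_def)
      ultimately show ?thesis unfolding power_add by (rule cong_mult)
    qed
    ultimately show ?thesis using assms(7) by (meson cong_sym cong_trans)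
  qed
  then have "[dlog p a m = dlog p a j + dlog p a l] (mod (p - 1))"
    using order_divides_expdiff[OF coprime_a] ord_a by simp
  then have "[int x * int (dlog p a m) = int x * int (dlog p a j) + int x * int (dlog p a l)] (mod int (p - 1))"
    by (metis cong_int_iff cong_scalar_left distrib_left of_nat_add)
  then have "EE (p - 1) (int x * int (dlog p a m)) = EE (p - 1) (int x * int (dlog p a j) + int x * int (dlog p a l))"
    by (rule EE_cong[OF p1_pos])
  then show ?thesis by (simp add: chi_EE EE_add)
qed

end


lemma completeness:
  fixes phi :: "nat \<Rightarrow> nat \<Rightarrow> complex" and p :: nat
  assumes orth: "\<And>x y. x < p \<Longrightarrow> y < p \<Longrightarrow> (\<Sum>n<p. phi x n * cnj (phi y n)) = (if x = y then 1 else 0)"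
  assumes "n < p" "m < p"
  shows "(\<Sum>x<p. cnj (phi x n) * phi x m) = (if n = m then 1 else 0)"
proof -
  define A :: "complex mat" where "A = Matrix.mat p p (\<lambda>(x, n). phi x n)"
  define B :: "complex mat" where "B = Matrix.mat p p (\<lambda>(n, x). cnj (phi x n))"
  have A: "A \<in> carrier_mat p p" and B: "B \<in> carrier_mat p p" unfolding A_def B_def by auto
  have "A * B = 1\<^sub>m p"
  proof (rule eq_matI)
    fix i j assume ij: "i < dim_row (1\<^sub>m p)" "j < dim_col (1\<^sub>m p)"
    then have "(A * B) $$ (i, j) = (\<Sum>k\<in>{0..<p}. phi i k * cnj (phi j k))"
      unfolding A_def B_def by (simp add: scalar_prod_def)
    also have "\<dots> = (if i = j then 1 else 0)" using orth[of i j] ij by (simp add: atLeast0LessThan)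
    finally show "(A * B) $$ (i, j) = 1\<^sub>m p $$ (i, j)" using ij by simp
  qed (auto simp: A_def B_def)
  then have BA: "B * A = 1\<^sub>m p" by (rule mat_mult_left_right_inverse[OF A B])
  have "(B * A) $$ (n, m) = (\<Sum>k\<in>{0..<p}. cnj (phi k n) * phi k m)"
    using assms(2,3) unfolding A_def B_def by (simp add: scalar_prod_def)
  then show ?thesis using BA assms(2,3) by (simp add: atLeast0LessThan)
qed


context L
begin

definition alpha :: complex where "alpha = 1 / of_real (sqrt (real p * real (p - 1)))"

definition w :: "nat \<Rightarrow> nat \<Rightarrow> complex" where
  "w x j = (if x = 0 then (if j = 0 then 1 / of_real (sqrt (real p)) else 0)
            else (if j = 0 then 0 else alpha * chi x j))"

lemma sum_split0: "(\<Sum>j<p. f j) = f 0 + (\<Sum>j\<in>{0<..<p}. f j)"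
proof -
  have "{..<p} = insert 0 {0<..<p}" using p_pos by auto
  then show ?thesis by simp
qed

lemma phi_eq: "phi p a x = (\<lambda>n. \<Sum>j<p. w x j * psi j n)"
proof
  fix n
  show "phi p a x n = (\<Sum>j<p. w x j * psi j n)"
  proof (cases "x = 0")
    case True
    have "(\<Sum>j<p. w x j * psi j n) = 1 / of_real (sqrt (real p)) * psi 0 n"
      by (subst sum_split0) (simp add: w_def True)
    then show ?thesis
      unfolding phi_def Let_def c_def[symmetric] h_def[symmetric] eta_pow_EE[OF p_pos]
      using True by (simp add: psi0)
  next
    case False
    have s: "{1..p - 1} = {0<..<p}" using p_pos by auto
    have "(\<Sum>j<p. w x j * psi j n) = (\<Sum>j\<in>{0<..<p}. alpha * chi x j * psi j n)"
      by (subst sum_split0) (simp add: w_def False)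
    also have "\<dots> = alpha * (\<Sum>j\<in>{0<..<p}. chi x j * psi j n)"
      by (simp add: sum_distrib_left mult_ac)
    finally show ?thesis
      unfolding phi_def Let_def c_def[symmetric] h_def[symmetric] eta_pow_EE[OF p_pos] s
      using False by (simp add: alpha_def chi_def psi_def)
  qed
qed

lemma sq_lemma: assumes "r > 0"
  shows "of_nat N * (complex_of_real (1 / sqrt r) * cnj (complex_of_real (1 / sqrt r))) * of_nat M
         = complex_of_real (real N * real M / r)"
proof -
  have ss: "sqrt r * sqrt r = r" using assms by simp
  have e: "1 / sqrt r * (1 / sqrt r) = 1 / r" using assms by simp
  have "complex_of_real (1 / sqrt r) * cnj (complex_of_real (1 / sqrt r)) = complex_of_real (1 / r)"
    by (simp only: of_real_mult[symmetric] complex_cnj_complex_of_real e)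
  then show ?thesis by simp
qed

lemma alpha_sq: "of_nat p * (alpha * cnj alpha) * of_nat (p - 1) = 1"
proof -
  have a: "alpha = complex_of_real (1 / sqrt (real p * real (p - 1)))" unfolding alpha_def by simp
  have pos: "real p * real (p - 1) > 0" using p_gt1 by simp
  show ?thesis unfolding a sq_lemma[OF pos] using pos p_gt1 by simp
qed

lemma beta_sq: "of_nat p * (1 / complex_of_real (sqrt (real p)) * cnj (1 / complex_of_real (sqrt (real p)))) = 1"
proof -
  have a: "1 / complex_of_real (sqrt (real p)) = complex_of_real (1 / sqrt (real p))" by simp
  have pos: "real p > 0" using p_gt1 by simp
  have "of_nat p * (complex_of_real (1 / sqrt (real p)) * cnj (complex_of_real (1 / sqrt (real p)))) * of_nat 1 = 1"
    unfolding sq_lemma[OF pos] using pos by simp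
  then show ?thesis unfolding a by simp
qed

lemma coef_orth: assumes "x < p" "y < p"
  shows "of_nat p * (\<Sum>j<p. w x j * cnj (w y j)) = (if x = y then 1 else 0)"
proof (cases "x = 0")
  case True
  show ?thesis
  proof (cases "y = 0")
    case True
    have "(\<Sum>j<p. w x j * cnj (w y j)) = 1 / complex_of_real (sqrt (real p)) * cnj (1 / complex_of_real (sqrt (real p)))"
      by (subst sum_split0) (simp add: w_def True \<open>x = 0\<close>)
    then show ?thesis using beta_sq True \<open>x = 0\<close> by simp
  next
    case False
    have "(\<Sum>j<p. w x j * cnj (w y j)) = 0"
      by (subst sum_split0) (simp add: w_def False \<open>x = 0\<close>)
    then show ?thesis using False True by simp
  qed
next
  case False
  show ?thesis
  proof (cases "y = 0")
    case True
    have "(\<Sum>j<p. w x j * cnj (w y j)) = 0"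
      by (subst sum_split0) (simp add: w_def False True)
    then show ?thesis using False True by simp
  next
    case yF: False
    have "(\<Sum>j<p. w x j * cnj (w y j)) = (\<Sum>j\<in>{0<..<p}. alpha * cnj alpha * (chi x j * cnj (chi y j)))"
      by (subst sum_split0) (simp add: w_def False yF mult_ac)
    also have "\<dots> = alpha * cnj alpha * (if x = y then of_nat (p - 1) else 0)"
      using char_orth[of x y] False yF assms by (simp add: sum_distrib_left[symmetric])
    finally show ?thesis using alpha_sq by (simp add: mult_ac)
  qed
qed

lemma tau0: "tau 0 = 0" unfolding tau_def by simp

lemma sigma0: "sigma 0 = 0" unfolding sigma_def by simp

lemma tau_nz: assumes "0 < l" "l < p" shows "0 < tau l"
proof (rule ccontr)
  assume "\<not> 0 < tau l"
  then have "tau l = 0" by simp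
  then have "sigma (tau l) = 0" by (simp add: sigma0)
  then show False using sigma_tau[OF assms(2)] assms(1) by simp
qed

definition lam :: "nat \<Rightarrow> complex" where "lam x = (if x = 0 then 1 else chi x (tau 1))"

lemma w_tau: assumes "l < p" shows "w x (tau l) = lam x * w x l"
proof (cases "l = 0")
  case True
  then show ?thesis by (simp add: tau0 w_def lam_def)
next
  case False
  then have l: "0 < l" by simp
  have t: "0 < tau l" "tau l < p" using tau_nz[OF l assms] tau_lt by auto
  have t1: "0 < tau 1" "tau 1 < p" using tau_nz[of 1] p_gt1 tau_lt by auto
  have "[int (tau l) = int (tau 1) * int l] (mod int p)"
  proof -
    have "[int (tau l) = - c * int l] (mod int p)" by (simp add: int_tau cong_def)
    moreover have "[int (tau 1) * int l = - c * int l] (mod int p)"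
      by (rule cong_scalar_right) (simp add: int_tau cong_def)
    ultimately show ?thesis by (meson cong_sym cong_trans)
  qed
  then have "[tau l = tau 1 * l] (mod p)" by (metis cong_int_iff of_nat_mult)
  then have "chi x (tau l) = chi x (tau 1) * chi x l"
    using chi_mult t t1 l assms by blast
  then show ?thesis using False t by (simp add: w_def lam_def)
qed

end


theorem theorem3:
  fixes p a :: nat
  assumes "prime p" and "p mod 4 = 1"
    and "a < p" and "residue_primroot p a"
  shows "(\<forall>x<p. \<forall>y<p. inner_Fp p (phi p a x) (phi p a y) = (if x = y then 1 else 0))
       \<and> (\<forall>f :: nat \<Rightarrow> complex. \<exists>c :: nat \<Rightarrow> complex.
             \<forall>n<p. f n = (\<Sum>x<p. c x * phi p a x n))
       \<and> (\<forall>x<p. (\<exists>n<p. phi p a x n \<noteq> 0) \<and>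
             (\<exists>ev::complex. \<forall>m<p. DFT p (phi p a x) m = ev * phi p a x m))"
proof -
  interpret L p a "int (a ^ ((p - 1) div 4) mod p)" "inv2 p"
    using assms by unfold_locales auto
  have orth: "inner_Fp p (phi p a x) (phi p a y) = (if x = y then 1 else 0)" if "x < p" "y < p" for x y
    unfolding phi_eq comb_inner using coef_orth[OF that] .
  have span: "\<exists>c :: nat \<Rightarrow> complex. \<forall>n<p. f n = (\<Sum>x<p. c x * phi p a x n)" for f :: "nat \<Rightarrow> complex"
  proof (intro exI allI impI)
    fix m assume m: "m < p"
    have comp: "(\<Sum>x<p. cnj (phi p a x n) * phi p a x m) = (if n = m then 1 else 0)" if "n < p" for n
      by (rule completeness[OF _ that m]) (use orth in \<open>simp add: inner_Fp_def\<close>)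
    have "(\<Sum>x<p. (\<Sum>n<p. f n * cnj (phi p a x n)) * phi p a x m)
        = (\<Sum>x<p. \<Sum>n<p. f n * (cnj (phi p a x n) * phi p a x m))"
      by (rule sum.cong[OF refl]) (simp only: sum_distrib_right mult.assoc)
    also have "\<dots> = (\<Sum>n<p. \<Sum>x<p. f n * (cnj (phi p a x n) * phi p a x m))" by (rule sum.swap)
    also have "\<dots> = (\<Sum>n<p. f n * (if n = m then 1 else 0))"
      by (rule sum.cong[OF refl]) (simp add: sum_distrib_left[symmetric] comp)
    also have "\<dots> = f m" using m by (simp add: if_distrib cong: if_cong)
    finally show "f m = (\<Sum>x<p. (\<Sum>n<p. f n * cnj (phi p a x n)) * phi p a x m)" by simp
  qed
  have eig: "(\<exists>n<p. phi p a x n \<noteq> 0) \<and> (\<exists>ev::complex. \<forall>m<p. DFT p (phi p a x) m = ev * phi p a x m)"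
    if x: "x < p" for x
  proof
    show "\<exists>n<p. phi p a x n \<noteq> 0"
    proof (rule ccontr)
      assume "\<not> (\<exists>n<p. phi p a x n \<noteq> 0)"
      then have "inner_Fp p (phi p a x) (phi p a x) = 0" unfolding inner_Fp_def by simp
      then show False using orth[OF x x] by simp
    qed
    show "\<exists>ev::complex. \<forall>m<p. DFT p (phi p a x) m = ev * phi p a x m"
    proof (intro exI allI impI)
      fix m assume "m < p"
      have "DFT p (phi p a x) m = G / of_real (sqrt (real p)) * (\<Sum>l<p. w x (tau l) * psi l m)"
        unfolding phi_eq by (rule comb_DFT)
      also have "(\<Sum>l<p. w x (tau l) * psi l m) = lam x * (\<Sum>l<p. w x l * psi l m)"
      proof -
        have "(\<Sum>l<p. w x (tau l) * psi l m) = (\<Sum>l<p. lam x * (w x l * psi l m))"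
          by (rule sum.cong[OF refl]) (simp only: lessThan_iff w_tau mult.assoc)
        then show ?thesis by (simp add: sum_distrib_left)
      qed
      finally show "DFT p (phi p a x) m = (G / of_real (sqrt (real p)) * lam x) * phi p a x m"
        unfolding phi_eq by simp
    qed
  qed
  show ?thesis using orth span eig by blast
qed


end
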